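(* Fix a horizon $T\ge 1$, $N\ge 1$ net-capacity-surplus profiles $(P_t(k))_{t=1}^T$, $k=1,\dots,N$, and an initial state of charge $S_0\ge 0$. For parameters $\overline{S}\ge S_0$ (energy capacity) and $\overline{x}\ge 0$ (power capacity), let $v_k(\overline{S},\overline{x})$ be the optimal value of problem (P1) for profile $k$, and $$\mathrm{EUE}(\overline{S},\overline{x})=\frac1N\sum_{k=1}^N\Big(\sum_{t=1}^T p_t^-(k)+v_k(\overline{S},\overline{x})\Big).$$ Then (P1) is feasible for every such parameter pair. Moreover, if the qualified capacity is taken to be $\overline{S}$, or $\overline{x}$, or more generally if the parameters move along a ray $(\overline{S},\overline{x})=(\overline{S}^0+a\theta,\ \overline{x}^0+b\theta)$, $\theta\ge 0$, with fixed $a,b\ge 0$, $(a,b)\neq(0,0)$, then $\mathrm{EUE}$, viewed as a function of this single parameter, has the following properties: (i) it is continuous and piecewise linear (with finitely many pieces); (ii) it is non-increasing, so the marginal reliability impact $\mathrm{MRI}=-\partial\,\mathrm{EUE}/\partial\,\mathrm{QC}$ is non-negative wherever it exists, and both one-sided derivatives of $\mathrm{EUE}$ are $\le 0$ everywhere. This holds regardless of the profiles $P_t(k)$.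
   Context: For a real number $P_t$ (the net capacity surplus at hour $t$: total available non-storage capacity minus demand), define the net power surplus $p_t^+=\max\{P_t,0\}$ and deficiency $p_t^-=\max\{-P_t,0\}$; thus $p_t^\pm\ge 0$ and $p_t^+p_t^-=0$. For one profile, problem (P1) (single storage under reliability dispatch) is $$\min_{S_1,\dots,S_T}\ \sum_{t=1}^T\min\{0,\,S_t-S_{t-1}\}$$ subject to, for all $t=1,\dots,T$ (with $S_0$ the given constant): $0\le S_t\le \overline{S}$ (multipliers $\lambda_{1t},\lambda_{2t}\ge0$), $-\overline{x}\le S_t-S_{t-1}\le \overline{x}$ (multipliers $\lambda_{3t}$ for the lower, $\lambda_{4t}$ for the upper bound), $-p_t^-\le S_t-S_{t-1}\le p_t^+$ (multipliers $\lambda_{5t},\lambda_{6t}$). Here $S_t$ is the state of charge at the end of hour $t$. The unserved energy of the profile is $\sum_t p_t^-+$ (optimal value), and EUE is the average over the $N$ equally likely profiles. *)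

theory Defs
  imports "HOL-Analysis.Analysis"
begin

definition psurplus :: "real \<Rightarrow> real" where
  "psurplus p = max p 0"

definition pdeficit :: "real \<Rightarrow> real" where
  "pdeficit p = max (- p) 0"

text \<open>S t is the state of charge at the end of hour t, S 0 = S0.\<close>
definition P1_feasible ::
  "nat \<Rightarrow> (nat \<Rightarrow> real) \<Rightarrow> real \<Rightarrow> real \<Rightarrow> real \<Rightarrow> (nat \<Rightarrow> real) \<Rightarrow> bool" where
  "P1_feasible T P S0 Sbar xbar S \<longleftrightarrow>
     S 0 = S0 \<and>
     (\<forall>t\<in>{1..T}.
        0 \<le> S t \<and> S t \<le> Sbar \<and>
        - xbar \<le> S t - S (t - 1) \<and> S t - S (t - 1) \<le> xbar \<and>
        - pdeficit (P t) \<le> S t - S (t - 1) \<and> S t - S (t - 1) \<le> psurplus (P t))"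

definition P1_objective :: "nat \<Rightarrow> (nat \<Rightarrow> real) \<Rightarrow> real" where
  "P1_objective T S = (\<Sum>t=1..T. min 0 (S t - S (t - 1)))"

definition P1_value :: "nat \<Rightarrow> (nat \<Rightarrow> real) \<Rightarrow> real \<Rightarrow> real \<Rightarrow> real \<Rightarrow> real" where
  "P1_value T P S0 Sbar xbar =
     Inf {P1_objective T S | S. P1_feasible T P S0 Sbar xbar S}"

definition EUE ::
  "nat \<Rightarrow> nat \<Rightarrow> (nat \<Rightarrow> nat \<Rightarrow> real) \<Rightarrow> real \<Rightarrow> real \<Rightarrow> real \<Rightarrow> real" where
  "EUE T N P S0 Sbar xbar =
     (1 / real N) * (\<Sum>k=1..N. (\<Sum>t=1..T. pdeficit (P k t)) + P1_value T (P k) S0 Sbar xbar)"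

definition piecewise_linear_nonneg :: "(real \<Rightarrow> real) \<Rightarrow> bool" where
  "piecewise_linear_nonneg f \<longleftrightarrow>
     (\<exists>B. finite B \<and>
        (\<forall>u v. 0 \<le> u \<and> u < v \<and> B \<inter> {u<..<v} = {} \<longrightarrow>
           (\<exists>\<alpha> \<beta>. \<forall>\<theta>\<in>{u..v}. f \<theta> = \<alpha> * \<theta> + \<beta>)))"

end

theory Submission
  imports Defs
begin


fun greedy :: "(nat \<Rightarrow> real) \<Rightarrow> real \<Rightarrow> real \<Rightarrow> real \<Rightarrow> nat \<Rightarrow> real" where
  "greedy p S0 Sb xb 0 = S0"
| "greedy p S0 Sb xb (Suc t) = min Sb (max 0 (greedy p S0 Sb xb t
      + min xb (psurplus (p (Suc t))) - min xb (pdeficit (p (Suc t)))))"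

lemma psd_nonneg: "psurplus x \<ge> 0" "pdeficit x \<ge> 0"
  by (auto simp: psurplus_def pdeficit_def)

lemma psd_compl: "psurplus x = 0 \<or> pdeficit x = 0"
  by (auto simp: psurplus_def pdeficit_def)

lemma greedy_bounds:
  assumes "0 \<le> S0" "S0 \<le> Sb"
  shows "0 \<le> greedy p S0 Sb xb t \<and> greedy p S0 Sb xb t \<le> Sb"
  using assms by (induction t) auto

lemma greedy_feasible:
  assumes "0 \<le> S0" "S0 \<le> Sb" "0 \<le> xb"
  shows "P1_feasible T p S0 Sb xb (greedy p S0 Sb xb)"
  unfolding P1_feasible_def
proof (intro conjI ballI)
  fix t assume "t \<in> {1..T}"
  then obtain s where t: "t = Suc s" by (cases t) auto
  have b: "0 \<le> greedy p S0 Sb xb s" "greedy p S0 Sb xb s \<le> Sb"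
    using greedy_bounds[OF assms(1,2)] by blast+
  have n: "psurplus (p t) \<ge> 0" "pdeficit (p t) \<ge> 0" by (rule psd_nonneg)+
  show "0 \<le> greedy p S0 Sb xb t" "greedy p S0 Sb xb t \<le> Sb"
    using greedy_bounds[OF assms(1,2)] by blast+
  show "- xb \<le> greedy p S0 Sb xb t - greedy p S0 Sb xb (t - 1)"
       "greedy p S0 Sb xb t - greedy p S0 Sb xb (t - 1) \<le> xb"
       "- pdeficit (p t) \<le> greedy p S0 Sb xb t - greedy p S0 Sb xb (t - 1)"
       "greedy p S0 Sb xb t - greedy p S0 Sb xb (t - 1) \<le> psurplus (p t)"
    using b n assms(3) unfolding t by (auto simp: min_def max_def)
qed simp

definition Dn :: "nat \<Rightarrow> (nat \<Rightarrow> real) \<Rightarrow> real" where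
  "Dn t S = - (\<Sum>s=1..t. min 0 (S s - S (s - 1)))"

lemma greedy_inv:
  assumes "0 \<le> S0" "S0 \<le> Sb" "0 \<le> xb" and F: "P1_feasible T p S0 Sb xb S"
  shows "t \<le> T \<Longrightarrow> Dn t S \<le> Dn t (greedy p S0 Sb xb) \<and>
     S t + Dn t S \<le> greedy p S0 Sb xb t + Dn t (greedy p S0 Sb xb)"
proof (induction t)
  case 0
  then show ?case using F by (simp add: Dn_def P1_feasible_def)
next
  case (Suc t)
  define g where "g = greedy p S0 Sb xb"
  have IH: "Dn t S \<le> Dn t g" "S t + Dn t S \<le> g t + Dn t g"
    using Suc by (auto simp: g_def)
  have f: "0 \<le> S (Suc t)" "S (Suc t) \<le> Sb" "- xb \<le> S (Suc t) - S t" "S (Suc t) - S t \<le> xb"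
    "- pdeficit (p (Suc t)) \<le> S (Suc t) - S t" "S (Suc t) - S t \<le> psurplus (p (Suc t))"
    using F Suc.prems unfolding P1_feasible_def by (auto dest!: bspec[of _ _ "Suc t"])
  have b: "0 \<le> g t" "g t \<le> Sb"
    using greedy_bounds[OF assms(1,2)] by (auto simp: g_def)
  have gs: "g (Suc t) = min Sb (max 0 (g t + min xb (psurplus (p (Suc t))) - min xb (pdeficit (p (Suc t)))))"
    by (simp add: g_def)
  have DS: "Dn (Suc t) S = Dn t S - min 0 (S (Suc t) - S t)"
    "Dn (Suc t) g = Dn t g - min 0 (g (Suc t) - g t)" by (simp_all add: Dn_def)
  have n: "psurplus (p (Suc t)) \<ge> 0" "pdeficit (p (Suc t)) \<ge> 0" by (rule psd_nonneg)+
  have "Dn (Suc t) S \<le> Dn (Suc t) g \<and> S (Suc t) + Dn (Suc t) S \<le> g (Suc t) + Dn (Suc t) g"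
    using psd_compl[of "p (Suc t)"]
  proof
    assume z: "psurplus (p (Suc t)) = 0"
    show ?thesis unfolding DS gs using z IH f b n assms(3) by (auto simp: min_def max_def)
  next
    assume z: "pdeficit (p (Suc t)) = 0"
    show ?thesis unfolding DS gs using z IH f b n assms(3) by (auto simp: min_def max_def)
  qed
  then show ?case by (simp add: g_def)
qed

lemma greedy_opt:
  assumes "0 \<le> S0" "S0 \<le> Sb" "0 \<le> xb" and F: "P1_feasible T p S0 Sb xb S"
  shows "P1_objective T (greedy p S0 Sb xb) \<le> P1_objective T S"
  using greedy_inv[OF assms, of T] by (simp add: Dn_def P1_objective_def)

lemma P1_value_greedy:
  assumes "0 \<le> S0" "S0 \<le> Sb" "0 \<le> xb"
  shows "P1_value T p S0 Sb xb = P1_objective T (greedy p S0 Sb xb)"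
  unfolding P1_value_def
  by (rule cInf_eq_minimum) (use greedy_feasible[OF assms] greedy_opt[OF assms] in auto)

lemma P1_value_mono:
  assumes "0 \<le> S0" "S0 \<le> Sb" "0 \<le> xb" "Sb \<le> Sb'" "xb \<le> xb'"
  shows "P1_value T p S0 Sb' xb' \<le> P1_value T p S0 Sb xb"
proof -
  have "P1_feasible T p S0 Sb' xb' (greedy p S0 Sb xb)"
    using greedy_feasible[OF assms(1-3), of T p] assms(4,5)
    unfolding P1_feasible_def by force
  then show ?thesis
    using P1_value_greedy[OF assms(1-3)] P1_value_greedy[of S0 Sb' xb'] greedy_opt[of S0 Sb' xb'] assms
    by force
qed


definition PL :: "(real \<Rightarrow> real) \<Rightarrow> bool" where
  "PL f \<longleftrightarrow> continuous_on UNIV f \<and> piecewise_linear_nonneg f"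

lemma PL_affine: "PL (\<lambda>x. \<alpha> * x + \<beta>)"
  unfolding PL_def piecewise_linear_nonneg_def
  by (auto intro!: continuous_intros exI[of _ "{}"])

lemma PL_const: "PL (\<lambda>x. c)"
  using PL_affine[of 0 c] by simp

lemma PL_add: assumes "PL f" "PL g" shows "PL (\<lambda>x. f x + g x)"
proof -
  obtain B1 where B1: "finite B1" "\<And>u v. 0 \<le> u \<Longrightarrow> u < v \<Longrightarrow> B1 \<inter> {u<..<v} = {} \<Longrightarrow>
           (\<exists>\<alpha> \<beta>. \<forall>\<theta>\<in>{u..v}. f \<theta> = \<alpha> * \<theta> + \<beta>)"
    using assms(1) unfolding PL_def piecewise_linear_nonneg_def by blast
  obtain B2 where B2: "finite B2" "\<And>u v. 0 \<le> u \<Longrightarrow> u < v \<Longrightarrow> B2 \<inter> {u<..<v} = {} \<Longrightarrow>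
           (\<exists>\<alpha> \<beta>. \<forall>\<theta>\<in>{u..v}. g \<theta> = \<alpha> * \<theta> + \<beta>)"
    using assms(2) unfolding PL_def piecewise_linear_nonneg_def by blast
  have "piecewise_linear_nonneg (\<lambda>x. f x + g x)"
    unfolding piecewise_linear_nonneg_def
  proof (intro exI[of _ "B1 \<union> B2"] conjI allI impI)
    fix u v assume h: "0 \<le> u \<and> u < v \<and> (B1 \<union> B2) \<inter> {u<..<v} = {}"
    obtain a1 b1 where 1: "\<forall>\<theta>\<in>{u..v}. f \<theta> = a1 * \<theta> + b1" using B1(2)[of u v] h by blast
    obtain a2 b2 where 2: "\<forall>\<theta>\<in>{u..v}. g \<theta> = a2 * \<theta> + b2" using B2(2)[of u v] h by blast
    show "\<exists>\<alpha> \<beta>. \<forall>\<theta>\<in>{u..v}. f \<theta> + g \<theta> = \<alpha> * \<theta> + \<beta>"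
      by (rule exI[of _ "a1 + a2"], rule exI[of _ "b1 + b2"]) (use 1 2 in \<open>auto simp: algebra_simps\<close>)
  qed (use B1 B2 in auto)
  then show ?thesis using assms unfolding PL_def by (auto intro!: continuous_intros)
qed

lemma PL_cmult: assumes "PL f" shows "PL (\<lambda>x. c * f x)"
proof -
  obtain B1 where B1: "finite B1" "\<And>u v. 0 \<le> u \<Longrightarrow> u < v \<Longrightarrow> B1 \<inter> {u<..<v} = {} \<Longrightarrow>
           (\<exists>\<alpha> \<beta>. \<forall>\<theta>\<in>{u..v}. f \<theta> = \<alpha> * \<theta> + \<beta>)"
    using assms(1) unfolding PL_def piecewise_linear_nonneg_def by blast
  have "piecewise_linear_nonneg (\<lambda>x. c * f x)"
    unfolding piecewise_linear_nonneg_def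
  proof (intro exI[of _ "B1"] conjI allI impI)
    fix u v assume h: "0 \<le> u \<and> u < v \<and> B1 \<inter> {u<..<v} = {}"
    obtain a1 b1 where 1: "\<forall>\<theta>\<in>{u..v}. f \<theta> = a1 * \<theta> + b1" using B1(2)[of u v] h by blast
    show "\<exists>\<alpha> \<beta>. \<forall>\<theta>\<in>{u..v}. c * f \<theta> = \<alpha> * \<theta> + \<beta>"
      by (rule exI[of _ "c * a1"], rule exI[of _ "c * b1"]) (use 1 in \<open>auto simp: algebra_simps\<close>)
  qed (use B1 in auto)
  then show ?thesis using assms unfolding PL_def by (auto intro!: continuous_intros)
qed

lemma PL_diff: assumes "PL f" "PL g" shows "PL (\<lambda>x. f x - g x)"
  using PL_add[OF assms(1) PL_cmult[OF assms(2), of "-1"]] by simp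

lemma PL_sum: "finite I \<Longrightarrow> (\<And>i. i \<in> I \<Longrightarrow> PL (f i)) \<Longrightarrow> PL (\<lambda>x. \<Sum>i\<in>I. f i x)"
  by (induction I rule: finite_induct) (auto intro: PL_add simp: PL_const)

lemma affine_nonneg:
  fixes a b u v x :: real
  assumes "a * u + b \<ge> 0" "a * v + b \<ge> 0" "u \<le> x" "x \<le> v"
  shows "a * x + b \<ge> 0"
proof (cases "a \<ge> 0")
  case True then have "a * u \<le> a * x" using assms by (simp add: mult_left_mono)
  then show ?thesis using assms by linarith
next
  case False then have "a * v \<le> a * x" using assms by (simp add: mult_left_mono_neg)
  then show ?thesis using assms by linarith
qed

lemma PL_pos: assumes "PL f" shows "PL (\<lambda>x. max (f x) 0)"
proof -
  obtain B where B: "finite B" "\<And>u v. 0 \<le> u \<Longrightarrow> u < v \<Longrightarrow> B \<inter> {u<..<v} = {} \<Longrightarrow>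
           (\<exists>\<alpha> \<beta>. \<forall>\<theta>\<in>{u..v}. f \<theta> = \<alpha> * \<theta> + \<beta>)"
    using assms(1) unfolding PL_def piecewise_linear_nonneg_def by blast
  define B0 where "B0 = insert 0 (B \<inter> {0..})"
  define Z where "Z = {z. 0 < z \<and> z \<notin> B \<and> f z = 0 \<and> (\<forall>e>0. \<exists>y. \<bar>y - z\<bar> < e \<and> f y \<noteq> 0)}"
  define m where "m z = Max {b\<in>B0. b < z}" for z
  have fB0: "finite B0" using B by (simp add: B0_def)
  have m: "m z \<in> B0" "m z < z" "\<And>b. b \<in> B0 \<Longrightarrow> b < z \<Longrightarrow> b \<le> m z" if "z > 0" for z
  proof -
    have ne: "{b\<in>B0. b < z} \<noteq> {}" "finite {b\<in>B0. b < z}" using that fB0 by (auto simp: B0_def intro: finite_subset[OF _ fB0])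
    show "m z \<in> B0" "m z < z" using Max_in[OF ne(2,1)] by (auto simp: m_def)
    show "\<And>b. b \<in> B0 \<Longrightarrow> b < z \<Longrightarrow> b \<le> m z" using Max_ge[OF ne(2)] by (auto simp: m_def)
  qed
  have key: "m z1 \<noteq> m z2" if z: "z1 \<in> Z" "z2 \<in> Z" "z1 < z2" for z1 z2
  proof
    assume eq: "m z1 = m z2"
    define b where "b = m z2"
    have zp: "z1 > 0" "z2 > 0" using z by (auto simp: Z_def)
    have b0: "b \<ge> 0" using m(1)[OF zp(2)] B by (auto simp: b_def B0_def)
    have bz1: "b < z1" using m(2)[OF zp(1)] eq by (simp add: b_def)
    have emp: "B \<inter> {b<..<z2} = {}"
    proof (rule ccontr)
      assume "B \<inter> {b<..<z2} \<noteq> {}"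
      then obtain x where "x \<in> B" "b < x" "x < z2" by auto
      then show False using m(3)[OF zp(2), of x] b0 by (auto simp: B0_def b_def)
    qed
    obtain \<alpha> \<beta> where ab: "\<forall>\<theta>\<in>{b..z2}. f \<theta> = \<alpha> * \<theta> + \<beta>"
      using B(2)[OF b0 _ emp] bz1 z(3) by auto
    have "f z1 = 0" "f z2 = 0" using z by (auto simp: Z_def)
    then have "\<alpha> * z1 + \<beta> = 0" "\<alpha> * z2 + \<beta> = 0" using ab bz1 z(3) by auto
    then have "\<alpha> * z2 - \<alpha> * z1 = 0" by linarith
    then have "\<alpha> * (z2 - z1) = 0" by (simp add: right_diff_distrib)
    then have a0: "\<alpha> = 0" "\<beta> = 0" using z(3) \<open>\<alpha> * z1 + \<beta> = 0\<close> by auto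
    have "\<forall>e>0. \<exists>y. \<bar>y - z1\<bar> < e \<and> f y \<noteq> 0" using z(1) by (simp add: Z_def)
    moreover have "min (z1 - b) (z2 - z1) > 0" using bz1 z(3) by simp
    ultimately obtain y where y: "\<bar>y - z1\<bar> < min (z1 - b) (z2 - z1)" "f y \<noteq> 0"
      by blast
    then have "y \<in> {b..z2}" by auto
    then show False using ab a0 y by auto
  qed
  have "inj_on m Z"
    by (rule inj_onI) (metis key linorder_neq_iff)
  moreover have "m ` Z \<subseteq> B0" using m(1) by (auto simp: Z_def)
  ultimately have fZ: "finite Z" using finite_imageD[OF finite_subset[OF _ fB0]] by blast
  have "piecewise_linear_nonneg (\<lambda>x. max (f x) 0)"
    unfolding piecewise_linear_nonneg_def
  proof (intro exI[of _ "B \<union> Z"] conjI allI impI)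
    fix u v assume h: "0 \<le> u \<and> u < v \<and> (B \<union> Z) \<inter> {u<..<v} = {}"
    obtain a1 b1 where 1: "\<forall>\<theta>\<in>{u..v}. f \<theta> = a1 * \<theta> + b1" using B(2)[of u v] h by blast
    consider "f u \<ge> 0 \<and> f v \<ge> 0" | "f u \<le> 0 \<and> f v \<le> 0" | "f u < 0 \<and> f v > 0" | "f u > 0 \<and> f v < 0"
      by linarith
    then show "\<exists>\<alpha> \<beta>. \<forall>\<theta>\<in>{u..v}. max (f \<theta>) 0 = \<alpha> * \<theta> + \<beta>"
    proof cases
      case c1: 1
      show ?thesis
        apply (rule exI[of _ a1], rule exI[of _ b1], rule ballI)
        subgoal for x using c1 affine_nonneg[of a1 u b1 v x] \<open>\<forall>\<theta>\<in>{u..v}. f \<theta> = a1 * \<theta> + b1\<close> h by auto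
        done
    next
      case c2: 2
      show ?thesis
        apply (rule exI[of _ 0], rule exI[of _ 0], rule ballI)
        subgoal for x using c2 affine_nonneg[of "-a1" u "-b1" v x] \<open>\<forall>\<theta>\<in>{u..v}. f \<theta> = a1 * \<theta> + b1\<close> h by auto
        done
    next
      case c: 3
      have fu: "a1 * u + b1 < 0" "a1 * v + b1 > 0" using c 1 h by auto
      have a: "a1 \<noteq> 0" using fu by auto
      define z where "z = - b1 / a1"
      have zf: "a1 * z + b1 = 0" using a by (simp add: z_def)
      have zuv: "u < z" "z < v"
      proof -
        have "a1 * (v - u) > 0" using fu by (simp add: algebra_simps)
        then have ap: "a1 > 0" using h by (simp add: zero_less_mult_iff)
        have "a1 * u < a1 * z" "a1 * z < a1 * v" using fu zf by linarith+
        then show "u < z" "z < v" using ap by simp_all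
      qed
      have "z \<in> Z"
        unfolding Z_def
      proof (intro CollectI conjI allI impI)
        show "0 < z" using zuv h by auto
        show "z \<notin> B" using zuv h by auto
        show "f z = 0" using 1 zuv zf by auto
        fix e :: real assume e: "e > 0"
        define w where "w = min e (v - z)"
        have mm: "0 < w" "w \<le> e" "w \<le> v - z" using zuv e by (auto simp: w_def)
        define y where "y = z + w / 2"
        have y: "y \<in> {u..v}" "\<bar>y - z\<bar> < e" "y \<noteq> z" unfolding y_def using zuv mm by auto
        have "f y = a1 * (y - z)" using 1 y zf by (auto simp: algebra_simps)
        then have "f y \<noteq> 0" using a y by auto
        then show "\<exists>y. \<bar>y - z\<bar> < e \<and> f y \<noteq> 0" using y by blast
      qed
      then show ?thesis using zuv h by auto
    next
      case c: 4
      have fu: "a1 * u + b1 > 0" "a1 * v + b1 < 0" using c 1 h by auto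
      have a: "a1 \<noteq> 0" using fu by auto
      define z where "z = - b1 / a1"
      have zf: "a1 * z + b1 = 0" using a by (simp add: z_def)
      have zuv: "u < z" "z < v"
      proof -
        have "a1 * (v - u) < 0" using fu by (simp add: algebra_simps)
        then have ap: "a1 < 0" using h by (simp add: mult_less_0_iff)
        have "a1 * u > a1 * z" "a1 * z > a1 * v" using fu zf by linarith+
        then show "u < z" "z < v" using ap by simp_all
      qed
      have "z \<in> Z"
        unfolding Z_def
      proof (intro CollectI conjI allI impI)
        show "0 < z" using zuv h by auto
        show "z \<notin> B" using zuv h by auto
        show "f z = 0" using 1 zuv zf by auto
        fix e :: real assume e: "e > 0"
        define w where "w = min e (v - z)"
        have mm: "0 < w" "w \<le> e" "w \<le> v - z" using zuv e by (auto simp: w_def)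
        define y where "y = z + w / 2"
        have y: "y \<in> {u..v}" "\<bar>y - z\<bar> < e" "y \<noteq> z" unfolding y_def using zuv mm by auto
        have "f y = a1 * (y - z)" using 1 y zf by (auto simp: algebra_simps)
        then have "f y \<noteq> 0" using a y by auto
        then show "\<exists>y. \<bar>y - z\<bar> < e \<and> f y \<noteq> 0" using y by blast
      qed
      then show ?thesis using zuv h by auto
    qed
  qed (use B fZ in auto)
  then show ?thesis using assms unfolding PL_def by (auto intro!: continuous_intros)
qed

lemma PL_min: assumes "PL f" "PL g" shows "PL (\<lambda>x. min (f x) (g x))"
proof -
  have "(\<lambda>x. min (f x) (g x)) = (\<lambda>x. f x - max (f x - g x) 0)" by (auto simp: fun_eq_iff min_def max_def)
  then show ?thesis using PL_diff[OF assms(1) PL_pos[OF PL_diff[OF assms]]] by simp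
qed

lemma PL_max: assumes "PL f" "PL g" shows "PL (\<lambda>x. max (f x) (g x))"
proof -
  have "(\<lambda>x. max (f x) (g x)) = (\<lambda>x. g x + max (f x - g x) 0)" by (auto simp: fun_eq_iff min_def max_def)
  then show ?thesis using PL_add[OF assms(2) PL_pos[OF PL_diff[OF assms]]] by simp
qed


lemma PL_greedy: "PL (\<lambda>\<theta>. greedy p S0 (Sb0 + a * \<theta>) (xb0 + b * \<theta>) t)"
proof (induction t)
  case 0 then show ?case by (simp add: PL_const)
next
  case (Suc t)
  have A1: "PL (\<lambda>\<theta>. Sb0 + a * \<theta>)" using PL_affine[of a Sb0] by (simp add: add.commute)
  have A2: "PL (\<lambda>\<theta>. xb0 + b * \<theta>)" using PL_affine[of b xb0] by (simp add: add.commute)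
  have c: "PL (\<lambda>\<theta>. min (xb0 + b * \<theta>) (psurplus (p (Suc t))))" by (rule PL_min[OF A2 PL_const])
  have d: "PL (\<lambda>\<theta>. min (xb0 + b * \<theta>) (pdeficit (p (Suc t))))" by (rule PL_min[OF A2 PL_const])
  have "PL (\<lambda>\<theta>. min (Sb0 + a * \<theta>) (max 0 (greedy p S0 (Sb0 + a * \<theta>) (xb0 + b * \<theta>) t
      + min (xb0 + b * \<theta>) (psurplus (p (Suc t))) - min (xb0 + b * \<theta>) (pdeficit (p (Suc t))))))"
    by (intro PL_min[OF A1] PL_max[OF PL_const] PL_diff PL_add Suc c d)
  then show ?case by simp
qed

lemma PL_obj: "PL (\<lambda>\<theta>. P1_objective T (greedy p S0 (Sb0 + a * \<theta>) (xb0 + b * \<theta>)))"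
  unfolding P1_objective_def
  by (intro PL_sum PL_min[OF PL_const] PL_diff PL_greedy) auto

lemma right_deriv:
  assumes pl: "piecewise_linear_nonneg f"
    and mono: "\<forall>\<theta>1 \<theta>2. 0 \<le> \<theta>1 \<longrightarrow> \<theta>1 \<le> \<theta>2 \<longrightarrow> f \<theta>2 \<le> f \<theta>1"
    and th: "0 \<le> \<theta>"
  shows "\<exists>D. D \<le> 0 \<and> (f has_real_derivative D) (at \<theta> within {\<theta>..})"
proof -
  obtain B where B: "finite B" "\<And>u v. 0 \<le> u \<Longrightarrow> u < v \<Longrightarrow> B \<inter> {u<..<v} = {} \<Longrightarrow>
           (\<exists>\<alpha> \<beta>. \<forall>x\<in>{u..v}. f x = \<alpha> * x + \<beta>)"
    using pl unfolding piecewise_linear_nonneg_def by blast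
  define M where "M = insert (\<theta> + 1) {b\<in>B. b > \<theta>}"
  define v where "v = Min M"
  have fM: "finite M" using B by (simp add: M_def)
  have v: "\<theta> < v" using Min_in[OF fM] by (auto simp: v_def M_def)
  have emp: "B \<inter> {\<theta><..<v} = {}"
  proof (rule ccontr)
    assume "B \<inter> {\<theta><..<v} \<noteq> {}"
    then obtain x where "x \<in> B" "\<theta> < x" "x < v" by auto
    then show False using Min_le[OF fM, of x] by (auto simp: M_def v_def)
  qed
  obtain \<alpha> \<beta> where ab: "\<forall>x\<in>{\<theta>..v}. f x = \<alpha> * x + \<beta>" using B(2)[OF th v emp] by blast
  have "((\<lambda>x. \<alpha> * x + \<beta>) has_real_derivative \<alpha>) (at \<theta> within {\<theta>..})"
    by (auto intro!: derivative_eq_intros)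
  then have d: "(f has_real_derivative \<alpha>) (at \<theta> within {\<theta>..})"
    by (rule has_field_derivative_transform_within[where d = "v - \<theta>"])
       (use v ab in \<open>auto simp: dist_real_def\<close>)
  have "f v \<le> f \<theta>" using mono th v by auto
  then have "\<alpha> * v \<le> \<alpha> * \<theta>" using ab v by auto
  then have "\<alpha> \<le> 0" using v by (metis linorder_not_le mult_strict_left_mono)
  then show ?thesis using d by blast
qed

lemma left_deriv:
  assumes pl: "piecewise_linear_nonneg f"
    and mono: "\<forall>\<theta>1 \<theta>2. 0 \<le> \<theta>1 \<longrightarrow> \<theta>1 \<le> \<theta>2 \<longrightarrow> f \<theta>2 \<le> f \<theta>1"
    and th: "0 < \<theta>"
  shows "\<exists>D. D \<le> 0 \<and> (f has_real_derivative D) (at \<theta> within {..\<theta>})"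
proof -
  obtain B where B: "finite B" "\<And>u v. 0 \<le> u \<Longrightarrow> u < v \<Longrightarrow> B \<inter> {u<..<v} = {} \<Longrightarrow>
           (\<exists>\<alpha> \<beta>. \<forall>x\<in>{u..v}. f x = \<alpha> * x + \<beta>)"
    using pl unfolding piecewise_linear_nonneg_def by blast
  define M where "M = insert 0 {b\<in>B. b < \<theta>}"
  define u where "u = Max M"
  have fM: "finite M" using B by (simp add: M_def)
  have u: "u < \<theta>" using Max_in[OF fM] th by (auto simp: u_def M_def)
  have u0: "0 \<le> u" using Max_ge[OF fM, of 0] by (auto simp: u_def M_def)
  have emp: "B \<inter> {u<..<\<theta>} = {}"
  proof (rule ccontr)
    assume "B \<inter> {u<..<\<theta>} \<noteq> {}"
    then obtain x where "x \<in> B" "u < x" "x < \<theta>" by auto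
    then show False using Max_ge[OF fM, of x] by (auto simp: M_def u_def)
  qed
  obtain \<alpha> \<beta> where ab: "\<forall>x\<in>{u..\<theta>}. f x = \<alpha> * x + \<beta>" using B(2)[OF u0 u emp] by blast
  have "((\<lambda>x. \<alpha> * x + \<beta>) has_real_derivative \<alpha>) (at \<theta> within {..\<theta>})"
    by (auto intro!: derivative_eq_intros)
  then have d: "(f has_real_derivative \<alpha>) (at \<theta> within {..\<theta>})"
    by (rule has_field_derivative_transform_within[where d = "\<theta> - u"])
       (use u ab in \<open>auto simp: dist_real_def\<close>)
  have "f \<theta> \<le> f u" using mono u0 u by auto
  then have "\<alpha> * \<theta> \<le> \<alpha> * u" using ab u u0 by auto
  then have "\<alpha> \<le> 0" using u by (metis linorder_not_le mult_strict_left_mono)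
  then show ?thesis using d by blast
qed

lemma deriv_nonpos:
  fixes f :: "real \<Rightarrow> real"
  assumes mono: "\<forall>\<theta>1 \<theta>2. 0 \<le> \<theta>1 \<longrightarrow> \<theta>1 \<le> \<theta>2 \<longrightarrow> f \<theta>2 \<le> f \<theta>1"
    and th: "0 < \<theta>" and D: "(f has_real_derivative D) (at \<theta>)"
  shows "- D \<ge> 0"
proof (rule ccontr)
  assume "\<not> - D \<ge> 0"
  then have "D > 0" by simp
  from DERIV_pos_inc_right[OF D this] obtain d where d: "d > 0" "\<forall>h>0. h < d \<longrightarrow> f \<theta> < f (\<theta> + h)"
    by blast
  have "f \<theta> < f (\<theta> + d/2)" using d by simp
  moreover have "f (\<theta> + d/2) \<le> f \<theta>" using mono th d by simp
  ultimately show False by simp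
qed


theorem theorem1:
  fixes T N :: nat and P :: "nat \<Rightarrow> nat \<Rightarrow> real" and S0 :: real
    and Sbar0 xbar0 a b :: real
  assumes hT: "T \<ge> 1" and hN: "N \<ge> 1" and hS0: "S0 \<ge> 0"
    and hSbar0: "Sbar0 \<ge> S0" and hxbar0: "xbar0 \<ge> 0"
    and ha: "a \<ge> 0" and hb: "b \<ge> 0" and hab: "(a, b) \<noteq> (0, 0)"
  shows
    "(\<forall>Sbar xbar. Sbar \<ge> S0 \<longrightarrow> xbar \<ge> 0 \<longrightarrow>
        (\<forall>k\<in>{1..N}. \<exists>S. P1_feasible T (P k) S0 Sbar xbar S))
     \<and> (let f = (\<lambda>\<theta>. EUE T N P S0 (Sbar0 + a * \<theta>) (xbar0 + b * \<theta>)) in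
          continuous_on {0..} f
        \<and> piecewise_linear_nonneg f
        \<and> (\<forall>\<theta>1 \<theta>2. 0 \<le> \<theta>1 \<longrightarrow> \<theta>1 \<le> \<theta>2 \<longrightarrow> f \<theta>2 \<le> f \<theta>1)
        \<and> (\<forall>\<theta> D. 0 < \<theta> \<longrightarrow> (f has_real_derivative D) (at \<theta>) \<longrightarrow> - D \<ge> 0)
        \<and> (\<forall>\<theta>. 0 \<le> \<theta> \<longrightarrow>
             (\<exists>D. D \<le> 0 \<and> (f has_real_derivative D) (at \<theta> within {\<theta>..})))
        \<and> (\<forall>\<theta>. 0 < \<theta> \<longrightarrow>
             (\<exists>D. D \<le> 0 \<and> (f has_real_derivative D) (at \<theta> within {..\<theta>}))))"
proof -
  have feas: "\<forall>Sbar xbar. Sbar \<ge> S0 \<longrightarrow> xbar \<ge> 0 \<longrightarrow>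
        (\<forall>k\<in>{1..N}. \<exists>S. P1_feasible T (P k) S0 Sbar xbar S)"
    using greedy_feasible[OF hS0] by blast
  define f where "f = (\<lambda>\<theta>. EUE T N P S0 (Sbar0 + a * \<theta>) (xbar0 + b * \<theta>))"
  define G where "G = (\<lambda>\<theta>. (1 / real N) * (\<Sum>k=1..N. (\<Sum>t=1..T. pdeficit (P k t))
      + P1_objective T (greedy (P k) S0 (Sbar0 + a * \<theta>) (xbar0 + b * \<theta>))))"
  have par: "S0 \<le> Sbar0 + a * \<theta>" "0 \<le> xbar0 + b * \<theta>" if "0 \<le> \<theta>" for \<theta>
    using that ha hb hSbar0 hxbar0 by (auto intro: add_increasing2)
  have fG: "f \<theta> = G \<theta>" if "0 \<le> \<theta>" for \<theta>
    unfolding f_def G_def EUE_def using P1_value_greedy[OF hS0 par[OF that]] by simp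
  have PLG: "PL G" unfolding G_def
    by (intro PL_cmult PL_sum PL_add PL_const PL_obj) auto
  have cont: "continuous_on {0..} f"
  proof -
    have "continuous_on {0..} G" using PLG unfolding PL_def by (auto intro: continuous_on_subset)
    then show ?thesis by (rule continuous_on_cong[THEN iffD1, rotated -1]) (auto simp: fG)
  qed
  have pl: "piecewise_linear_nonneg f"
  proof -
    obtain B where B: "finite B" "\<And>u v. 0 \<le> u \<Longrightarrow> u < v \<Longrightarrow> B \<inter> {u<..<v} = {} \<Longrightarrow>
           (\<exists>\<alpha> \<beta>. \<forall>x\<in>{u..v}. G x = \<alpha> * x + \<beta>)"
      using PLG unfolding PL_def piecewise_linear_nonneg_def by blast
    show ?thesis unfolding piecewise_linear_nonneg_def
    proof (intro exI[of _ B] conjI allI impI)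
      fix u v assume h: "0 \<le> u \<and> u < v \<and> B \<inter> {u<..<v} = {}"
      then obtain \<alpha> \<beta> where "\<forall>x\<in>{u..v}. G x = \<alpha> * x + \<beta>" using B(2) by blast
      then show "\<exists>\<alpha> \<beta>. \<forall>x\<in>{u..v}. f x = \<alpha> * x + \<beta>" using h fG by auto
    qed (rule B(1))
  qed
  have mono: "\<forall>\<theta>1 \<theta>2. 0 \<le> \<theta>1 \<longrightarrow> \<theta>1 \<le> \<theta>2 \<longrightarrow> f \<theta>2 \<le> f \<theta>1"
  proof (intro allI impI)
    fix \<theta>1 \<theta>2 :: real assume h: "0 \<le> \<theta>1" "\<theta>1 \<le> \<theta>2"
    have le: "a * \<theta>1 \<le> a * \<theta>2" "b * \<theta>1 \<le> b * \<theta>2" using h ha hb by (auto intro: mult_left_mono)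
    have "(\<Sum>k=1..N. (\<Sum>t=1..T. pdeficit (P k t)) + P1_value T (P k) S0 (Sbar0 + a * \<theta>2) (xbar0 + b * \<theta>2))
        \<le> (\<Sum>k=1..N. (\<Sum>t=1..T. pdeficit (P k t)) + P1_value T (P k) S0 (Sbar0 + a * \<theta>1) (xbar0 + b * \<theta>1))"
      by (intro sum_mono add_left_mono P1_value_mono[OF hS0 par[OF h(1)]]) (use le in auto)
    then show "f \<theta>2 \<le> f \<theta>1" unfolding f_def EUE_def by (intro mult_left_mono) auto
  qed
  show ?thesis
    unfolding Let_def f_def[symmetric]
    using feas cont pl mono deriv_nonpos[OF mono] right_deriv[OF pl mono] left_deriv[OF pl mono]
    by blast
qed

end
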